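(* Let $M_1$ and $M_2$ be matroids on a finite set $E$. If $M_1$ is connected and $M_2$ has exactly two connected components, $P$ and $Q$, then the mixing graph $G_{M_1,M_2}$ has at most two connected components.
   Context: With $r_1,r_2$ the rank functions of $M_1,M_2$, let $\mathscr{X}=\{A\subseteq E: r_1(A)\ne r_2(A)\}$. The mixing graph $G_{M_1,M_2}$ has vertex set $\mathscr{X}$, and $AB$ is an edge iff either (i) $A\subsetneq B$ or $B\subsetneq A$, or (ii) $A\cap B\notin\mathscr{X}$, $A\cup B\notin\mathscr{X}$, and $|A\triangle B|=2$ ($\triangle$ is symmetric difference). That $M_2$ has exactly two connected components $P,Q$ means $E=P\cup Q$ is a partition with $M_2=M_2|P\oplus M_2|Q$ and both $M_2|P$, $M_2|Q$ connected. *)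

theory Defs
  imports Main
begin

definition matroid :: "'a set \<Rightarrow> ('a set \<Rightarrow> bool) \<Rightarrow> bool" where
  "matroid E indep \<longleftrightarrow> finite E \<and> (\<forall>X. indep X \<longrightarrow> X \<subseteq> E) \<and> indep {} \<and>
     (\<forall>X Y. indep Y \<and> X \<subseteq> Y \<longrightarrow> indep X) \<and>
     (\<forall>X Y. indep X \<and> indep Y \<and> card X < card Y \<longrightarrow> (\<exists>e\<in>Y - X. indep (insert e X)))"

definition rank :: "('a set \<Rightarrow> bool) \<Rightarrow> 'a set \<Rightarrow> nat" where
  "rank indep A = Max {card X | X. X \<subseteq> A \<and> indep X}"

definition circuit :: "'a set \<Rightarrow> ('a set \<Rightarrow> bool) \<Rightarrow> 'a set \<Rightarrow> bool" where
  "circuit E indep C \<longleftrightarrow> C \<subseteq> E \<and> \<not> indep C \<and> (\<forall>x\<in>C. indep (C - {x}))"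

definition connected_matroid :: "'a set \<Rightarrow> ('a set \<Rightarrow> bool) \<Rightarrow> bool" where
  "connected_matroid E indep \<longleftrightarrow>
     (\<forall>x\<in>E. \<forall>y\<in>E. x \<noteq> y \<longrightarrow> (\<exists>C. circuit E indep C \<and> x \<in> C \<and> y \<in> C))"

definition restrict_matroid :: "('a set \<Rightarrow> bool) \<Rightarrow> 'a set \<Rightarrow> ('a set \<Rightarrow> bool)" where
  "restrict_matroid indep P = (\<lambda>X. indep X \<and> X \<subseteq> P)"

text \<open>M has exactly two connected components P and Q:
  E = P \<union> Q is a partition into nonempty parts, M = M|P \<oplus> M|Q, and M|P, M|Q connected.\<close>
definition two_components :: "'a set \<Rightarrow> ('a set \<Rightarrow> bool) \<Rightarrow> 'a set \<Rightarrow> 'a set \<Rightarrow> bool" where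
  "two_components E indep P Q \<longleftrightarrow>
     P \<noteq> {} \<and> Q \<noteq> {} \<and> P \<inter> Q = {} \<and> P \<union> Q = E \<and>
     (\<forall>X. X \<subseteq> E \<longrightarrow> (indep X \<longleftrightarrow> indep (X \<inter> P) \<and> indep (X \<inter> Q))) \<and>
     connected_matroid P (restrict_matroid indep P) \<and>
     connected_matroid Q (restrict_matroid indep Q)"

definition mix_vertices :: "'a set \<Rightarrow> ('a set \<Rightarrow> bool) \<Rightarrow> ('a set \<Rightarrow> bool) \<Rightarrow> 'a set set" where
  "mix_vertices E I1 I2 = {A. A \<subseteq> E \<and> rank I1 A \<noteq> rank I2 A}"

definition mix_edges :: "'a set \<Rightarrow> ('a set \<Rightarrow> bool) \<Rightarrow> ('a set \<Rightarrow> bool) \<Rightarrow> ('a set \<times> 'a set) set" where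
  "mix_edges E I1 I2 = {(A, B). A \<in> mix_vertices E I1 I2 \<and> B \<in> mix_vertices E I1 I2 \<and>
     (A \<subset> B \<or> B \<subset> A \<or>
      (A \<inter> B \<notin> mix_vertices E I1 I2 \<and> A \<union> B \<notin> mix_vertices E I1 I2 \<and>
       card ((A - B) \<union> (B - A)) = 2))}"

definition mix_components :: "'a set \<Rightarrow> ('a set \<Rightarrow> bool) \<Rightarrow> ('a set \<Rightarrow> bool) \<Rightarrow> 'a set set set" where
  "mix_components E I1 I2 = mix_vertices E I1 I2 // ((mix_edges E I1 I2)\<^sup>*)"

end

theory Submission
  imports Defs
begin


locale mat = fixes E :: "'a set" and ind :: "'a set \<Rightarrow> bool"
  assumes m: "matroid E ind"
begin

lemma fin: "finite E" using m unfolding matroid_def by blast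
lemma ind_sub: "ind X \<Longrightarrow> X \<subseteq> E" using m unfolding matroid_def by blast
lemma ind_empty: "ind {}" using m unfolding matroid_def by blast
lemma ind_mono: "ind Y \<Longrightarrow> X \<subseteq> Y \<Longrightarrow> ind X" using m unfolding matroid_def by blast
lemma aug: "ind X \<Longrightarrow> ind Y \<Longrightarrow> card X < card Y \<Longrightarrow> \<exists>e\<in>Y - X. ind (insert e X)"
  using m unfolding matroid_def by blast

lemma rset_fin: "X \<subseteq> E \<Longrightarrow> finite {card Y | Y. Y \<subseteq> X \<and> ind Y}"
proof -
  assume "X \<subseteq> E"
  have "{card Y | Y. Y \<subseteq> X \<and> ind Y} \<subseteq> card ` Pow X" by auto
  moreover have "finite (Pow X)" using fin \<open>X \<subseteq> E\<close> finite_subset by blast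
  ultimately show ?thesis using finite_subset by blast
qed

lemma rank_ge: "X \<subseteq> E \<Longrightarrow> Y \<subseteq> X \<Longrightarrow> ind Y \<Longrightarrow> card Y \<le> rank ind X"
  unfolding rank_def by (rule Max_ge) (auto simp: rset_fin)

lemma rank_ex: "X \<subseteq> E \<Longrightarrow> \<exists>Y. Y \<subseteq> X \<and> ind Y \<and> card Y = rank ind X"
proof -
  assume X: "X \<subseteq> E"
  have ne: "{card Y | Y. Y \<subseteq> X \<and> ind Y} \<noteq> {}" using ind_empty by blast
  have "rank ind X \<in> {card Y | Y. Y \<subseteq> X \<and> ind Y}"
    unfolding rank_def by (rule Max_in) (use X rset_fin ne in auto)
  then show ?thesis by auto
qed

lemma rank_le_card: "X \<subseteq> E \<Longrightarrow> rank ind X \<le> card X"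
proof -
  assume X: "X \<subseteq> E"
  then obtain Y where "Y \<subseteq> X" "card Y = rank ind X" using rank_ex by blast
  moreover have "finite X" using X fin finite_subset by blast
  ultimately show ?thesis using card_mono by metis
qed

lemma rank_mono: "X \<subseteq> Y \<Longrightarrow> Y \<subseteq> E \<Longrightarrow> rank ind X \<le> rank ind Y"
proof -
  assume XY: "X \<subseteq> Y" and Y: "Y \<subseteq> E"
  then obtain Z where "Z \<subseteq> X" "ind Z" "card Z = rank ind X" using rank_ex by (meson order_trans)
  then show ?thesis using rank_ge[OF Y, of Z] XY by auto
qed

lemma rank_empty: "rank ind {} = 0"
  using rank_le_card[of "{}"] by auto

lemma rank_indep: "ind X \<Longrightarrow> rank ind X = card X"
  using rank_ge[of X X] rank_le_card[of X] ind_sub by force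

lemma rank_dep: "X \<subseteq> E \<Longrightarrow> \<not> ind X \<Longrightarrow> rank ind X < card X"
proof -
  assume X: "X \<subseteq> E" and n: "\<not> ind X"
  obtain Y where Y: "Y \<subseteq> X" "ind Y" "card Y = rank ind X" using rank_ex X by blast
  have fX: "finite X" using X fin finite_subset by blast
  have "Y \<noteq> X" using Y n by blast
  then have "card Y < card X" using Y fX by (meson card_seteq not_le)
  then show ?thesis using Y by simp
qed

lemma extend: "X \<subseteq> E \<Longrightarrow> I \<subseteq> X \<Longrightarrow> ind I \<Longrightarrow> \<exists>J. I \<subseteq> J \<and> J \<subseteq> X \<and> ind J \<and> card J = rank ind X"
proof (induction "rank ind X - card I" arbitrary: I rule: less_induct)
  case less
  have le: "card I \<le> rank ind X" using rank_ge less.prems by blast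
  show ?case
  proof (cases "card I = rank ind X")
    case True then show ?thesis using less.prems by blast
  next
    case False
    then have lt: "card I < rank ind X" using le by simp
    obtain Y where Y: "Y \<subseteq> X" "ind Y" "card Y = rank ind X" using rank_ex[OF less.prems(1)] by metis
    obtain e where e: "e \<in> Y - I" "ind (insert e I)" using aug[OF less.prems(3) Y(2)] lt Y(3) by auto
    have fI: "finite I" using less.prems(1,2) fin finite_subset by metis
    have ci: "card (insert e I) = card I + 1" using e fI by simp
    have "rank ind X - card (insert e I) < rank ind X - card I" using ci lt by simp
    moreover have "insert e I \<subseteq> X" using e Y less.prems by blast
    ultimately obtain J where J: "insert e I \<subseteq> J" "J \<subseteq> X" "ind J" "card J = rank ind X"
      using less.hyps[of "insert e I"] less.prems(1) e(2) by blast
    then show ?thesis by blast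
  qed
qed

lemma submod: "A \<subseteq> E \<Longrightarrow> B \<subseteq> E \<Longrightarrow> rank ind (A \<union> B) + rank ind (A \<inter> B) \<le> rank ind A + rank ind B"
proof -
  assume A: "A \<subseteq> E" and B: "B \<subseteq> E"
  have AB: "A \<inter> B \<subseteq> E" using A by blast
  obtain I where I: "I \<subseteq> A \<inter> B" "ind I" "card I = rank ind (A \<inter> B)" using rank_ex[OF AB] by metis
  obtain J where J: "I \<subseteq> J" "J \<subseteq> A \<union> B" "ind J" "card J = rank ind (A \<union> B)"
    using extend[of "A \<union> B" I] A B I by blast
  have "A \<union> B \<subseteq> E" using A B by blast
  then have fJ: "finite J" using J(2) fin finite_subset by metis
  have "card (J \<inter> A) \<le> rank ind A" using rank_ge[OF A, of "J \<inter> A"] ind_mono J by blast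
  moreover have "card (J \<inter> B) \<le> rank ind B" using rank_ge[OF B, of "J \<inter> B"] ind_mono J by blast
  moreover have "card (J \<inter> A) + card (J \<inter> B) = card ((J \<inter> A) \<union> (J \<inter> B)) + card ((J \<inter> A) \<inter> (J \<inter> B))"
    using card_Un_Int fJ by (metis finite_Int)
  moreover have "(J \<inter> A) \<union> (J \<inter> B) = J" using J by blast
  ultimately have "card (J \<inter> A) + card (J \<inter> B) = card J + card ((J \<inter> A) \<inter> (J \<inter> B))" 
    "card (J \<inter> A) \<le> rank ind A" "card (J \<inter> B) \<le> rank ind B" by simp_all
  moreover have "card I \<le> card ((J \<inter> A) \<inter> (J \<inter> B))"
    using I J fJ by (intro card_mono) auto
  ultimately show ?thesis using I J by linarith
qed

lemma rank_insert: "X \<subseteq> E \<Longrightarrow> e \<in> E \<Longrightarrow> rank ind (insert e X) \<le> rank ind X + 1"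
proof -
  assume X: "X \<subseteq> E" and e: "e \<in> E"
  have "rank ind (X \<union> {e}) + rank ind (X \<inter> {e}) \<le> rank ind X + rank ind {e}"
    using submod[of X "{e}"] X e by blast
  moreover have "rank ind {e} \<le> 1" using rank_le_card[of "{e}"] e by auto
  moreover have "X \<union> {e} = insert e X" by blast
  ultimately show ?thesis by simp
qed

lemma span_union: "B \<subseteq> E \<Longrightarrow> S \<subseteq> E \<Longrightarrow> (\<forall>p\<in>S. rank ind (insert p B) = rank ind B) \<Longrightarrow> rank ind (B \<union> S) = rank ind B"
proof -
  assume B: "B \<subseteq> E" and S: "S \<subseteq> E" and h: "\<forall>p\<in>S. rank ind (insert p B) = rank ind B"
  have "finite S" using S fin finite_subset by metis
  then show ?thesis using S h
  proof (induction S rule: finite_induct)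
    case empty then show ?case by simp
  next
    case (insert p S)
    show ?case
    proof (cases "p \<in> B")
      case True
      then have "B \<union> insert p S = B \<union> S" by blast
      then show ?thesis using insert by simp
    next
      case False
      have 1: "(B \<union> S) \<union> insert p B = B \<union> insert p S" by blast
      have 2: "(B \<union> S) \<inter> insert p B = B" using False insert by blast
      have "rank ind ((B \<union> S) \<union> insert p B) + rank ind ((B \<union> S) \<inter> insert p B) \<le> rank ind (B \<union> S) + rank ind (insert p B)"
        using submod B insert by (intro submod) auto
      then have "rank ind (B \<union> insert p S) \<le> rank ind B" using 1 2 insert by simp
      moreover have "rank ind B \<le> rank ind (B \<union> insert p S)" using B insert by (intro rank_mono) auto
      ultimately show ?thesis by simp
    qed
  qed
qed

lemma coloops: "A \<subseteq> E \<Longrightarrow> S \<subseteq> A \<Longrightarrow> (\<forall>q\<in>S. rank ind (A - {q}) + 1 = rank ind A) \<Longrightarrow> rank ind (A - S) + card S = rank ind A"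
proof -
  assume A: "A \<subseteq> E" and S: "S \<subseteq> A" and h: "\<forall>q\<in>S. rank ind (A - {q}) + 1 = rank ind A"
  have "S \<subseteq> E" using S A by blast
  then have "finite S" using fin finite_subset by metis
  then show ?thesis using S h
  proof (induction S rule: finite_induct)
    case empty then show ?case by simp
  next
    case (insert q S)
    have 1: "(A - S) \<union> (A - {q}) = A" using insert by blast
    have 2: "(A - S) \<inter> (A - {q}) = A - insert q S" by blast
    have "rank ind ((A - S) \<union> (A - {q})) + rank ind ((A - S) \<inter> (A - {q})) \<le> rank ind (A - S) + rank ind (A - {q})"
      using A by (intro submod) auto
    then have le: "rank ind A + rank ind (A - insert q S) \<le> rank ind (A - S) + rank ind (A - {q})" using 1 2 by simp
    have 3: "insert q (A - insert q S) = A - S" using insert by blast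
    have ge: "rank ind (A - S) \<le> rank ind (A - insert q S) + 1"
      using rank_insert[of "A - insert q S" q] 3 A insert by auto
    have ih: "rank ind (A - S) + card S = rank ind A" using insert by auto
    have hq: "rank ind (A - {q}) + 1 = rank ind A" using insert by auto
    show ?case using le ge ih hq insert by simp
  qed
qed

end


context mat begin

lemma dsum:
  assumes PQ: "P \<inter> Q = {}" "P \<union> Q = E"
    and dec: "\<forall>X. X \<subseteq> E \<longrightarrow> (ind X \<longleftrightarrow> ind (X \<inter> P) \<and> ind (X \<inter> Q))"
    and X: "X \<subseteq> E"
  shows "rank ind X = rank ind (X \<inter> P) + rank ind (X \<inter> Q)"
proof (rule antisym)
  have XP: "X \<inter> P \<subseteq> E" and XQ: "X \<inter> Q \<subseteq> E" using X by auto
  obtain Y where Y: "Y \<subseteq> X" "ind Y" "card Y = rank ind X" using rank_ex[OF X] by metis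
  have fY: "finite Y" using Y(1) X fin finite_subset by metis
  have YE: "Y \<subseteq> E" using Y X by blast
  have "ind (Y \<inter> P)" "ind (Y \<inter> Q)" using dec YE Y(2) by blast+
  then have "card (Y \<inter> P) \<le> rank ind (X \<inter> P)" "card (Y \<inter> Q) \<le> rank ind (X \<inter> Q)"
    using rank_ge[OF XP, of "Y \<inter> P"] rank_ge[OF XQ, of "Y \<inter> Q"] Y(1) by auto
  moreover have "card Y = card (Y \<inter> P) + card (Y \<inter> Q)"
  proof -
    have "Y = (Y \<inter> P) \<union> (Y \<inter> Q)" using YE PQ by blast
    moreover have "(Y \<inter> P) \<inter> (Y \<inter> Q) = {}" using PQ by blast
    ultimately show ?thesis using fY card_Un_disjoint by (metis finite_Int)
  qed
  ultimately show "rank ind X \<le> rank ind (X \<inter> P) + rank ind (X \<inter> Q)" using Y by linarith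
next
  have XP: "X \<inter> P \<subseteq> E" and XQ: "X \<inter> Q \<subseteq> E" using X by auto
  obtain Y1 where Y1: "Y1 \<subseteq> X \<inter> P" "ind Y1" "card Y1 = rank ind (X \<inter> P)" using rank_ex[OF XP] by metis
  obtain Y2 where Y2: "Y2 \<subseteq> X \<inter> Q" "ind Y2" "card Y2 = rank ind (X \<inter> Q)" using rank_ex[OF XQ] by metis
  have s: "Y1 \<union> Y2 \<subseteq> X" using Y1 Y2 by blast
  have "(Y1 \<union> Y2) \<inter> P = Y1" "(Y1 \<union> Y2) \<inter> Q = Y2" using Y1(1) Y2(1) PQ by blast+
  then have "ind (Y1 \<union> Y2)" using dec s X Y1(2) Y2(2) by (metis order_trans)
  then have "card (Y1 \<union> Y2) \<le> rank ind X" using rank_ge[OF X s] by blast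
  moreover have "card (Y1 \<union> Y2) = card Y1 + card Y2"
  proof (rule card_Un_disjoint)
    show "finite Y1" using Y1(1) XP fin finite_subset by (metis order_trans)
    show "finite Y2" using Y2(1) XQ fin finite_subset by (metis order_trans)
    show "Y1 \<inter> Y2 = {}" using Y1(1) Y2(1) PQ by blast
  qed
  ultimately show "rank ind (X \<inter> P) + rank ind (X \<inter> Q) \<le> rank ind X" using Y1 Y2 by linarith
qed

lemma conn_sep:
  assumes c: "connected_matroid E ind" and PQ: "P \<inter> Q = {}" "P \<union> Q = E" "P \<noteq> {}" "Q \<noteq> {}"
  shows "rank ind E < rank ind P + rank ind Q"
proof (rule ccontr)
  assume ng: "\<not> ?thesis"
  obtain p q where pq: "p \<in> P" "q \<in> Q" using PQ by blast
  then have "p \<noteq> q" "p \<in> E" "q \<in> E" using PQ by blast+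
  then obtain C where C: "circuit E ind C" "p \<in> C" "q \<in> C" using c unfolding connected_matroid_def by blast
  have CE: "C \<subseteq> E" and nC: "\<not> ind C" and Cx: "\<forall>x\<in>C. ind (C - {x})" using C(1) unfolding circuit_def by auto
  have fC: "finite C" using CE fin finite_subset by metis
  have iP: "ind (C \<inter> P)" using Cx C(3) pq PQ ind_mono[of "C - {q}" "C \<inter> P"] by blast
  have iQ: "ind (C \<inter> Q)" using Cx C(2) pq PQ ind_mono[of "C - {p}" "C \<inter> Q"] by blast
  have rP: "rank ind (C \<inter> P) = card (C \<inter> P)" using rank_indep iP by blast
  have rQ: "rank ind (C \<inter> Q) = card (C \<inter> Q)" using rank_indep iQ by blast
  have cc: "card C = card (C \<inter> P) + card (C \<inter> Q)"
  proof -
    have "C = (C \<inter> P) \<union> (C \<inter> Q)" using CE PQ by blast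
    moreover have "(C \<inter> P) \<inter> (C \<inter> Q) = {}" using PQ by blast
    ultimately show ?thesis using fC card_Un_disjoint by (metis finite_Int)
  qed
  have rC: "rank ind C < card C" using rank_dep CE nC by blast
  have PE: "P \<subseteq> E" "Q \<subseteq> E" using PQ by blast+
  have s1: "rank ind ((P \<union> (C \<inter> Q)) \<union> Q) + rank ind ((P \<union> (C \<inter> Q)) \<inter> Q) \<le> rank ind (P \<union> (C \<inter> Q)) + rank ind Q"
    using PE CE by (intro submod) auto
  have e1: "(P \<union> (C \<inter> Q)) \<union> Q = E" "(P \<union> (C \<inter> Q)) \<inter> Q = C \<inter> Q" using PQ by blast+
  have s2: "rank ind (C \<union> P) + rank ind (C \<inter> P) \<le> rank ind C + rank ind P"
    using PE CE by (intro submod) auto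
  have e2: "C \<union> P = P \<union> (C \<inter> Q)" using CE PQ by blast
  show False using s1 s2 e1 e2 rP rQ cc rC ng by simp
qed

end

lemma memV: "A \<in> mix_vertices E I1 I2 \<longleftrightarrow> A \<subseteq> E \<and> rank I1 A \<noteq> rank I2 A"
  by (simp add: mix_vertices_def)

lemma edge_sym: "(A, B) \<in> mix_edges E I1 I2 \<Longrightarrow> (B, A) \<in> mix_edges E I1 I2"
  unfolding mix_edges_def by (auto simp: Int_commute Un_commute)

lemma rtr_sym: "(A, B) \<in> (mix_edges E I1 I2)\<^sup>* \<Longrightarrow> (B, A) \<in> (mix_edges E I1 I2)\<^sup>*"
proof -
  have "sym (mix_edges E I1 I2)" unfolding sym_def using edge_sym by blast
  then have "sym ((mix_edges E I1 I2)\<^sup>*)" by (rule sym_rtrancl)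
  then show "(A, B) \<in> (mix_edges E I1 I2)\<^sup>* \<Longrightarrow> (B, A) \<in> (mix_edges E I1 I2)\<^sup>*"
    unfolding sym_def by blast
qed

lemma comp_conn: "A \<in> mix_vertices E I1 I2 \<Longrightarrow> B \<in> mix_vertices E I1 I2 \<Longrightarrow> A \<subseteq> B \<or> B \<subseteq> A
  \<Longrightarrow> (A, B) \<in> (mix_edges E I1 I2)\<^sup>*"
proof -
  assume a: "A \<in> mix_vertices E I1 I2" "B \<in> mix_vertices E I1 I2" "A \<subseteq> B \<or> B \<subseteq> A"
  show ?thesis
  proof (cases "A = B")
    case True then show ?thesis by simp
  next
    case False
    then have "(A, B) \<in> mix_edges E I1 I2" using a unfolding mix_edges_def by auto
    then show ?thesis by blast
  qed
qed



lemma mu_lt: "finite E \<Longrightarrow> A \<subseteq> E \<Longrightarrow> P \<subseteq> E \<Longrightarrow> (B - P) \<union> (P - B) \<subset> (A - P) \<union> (P - A)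
  \<Longrightarrow> card ((B - P) \<union> (P - B)) < card ((A - P) \<union> (P - A))"
proof -
  assume a: "finite E" "A \<subseteq> E" "P \<subseteq> E" "(B - P) \<union> (P - B) \<subset> (A - P) \<union> (P - A)"
  have "(A - P) \<union> (P - A) \<subseteq> E" using a by blast
  then have "finite ((A - P) \<union> (P - A))" using a(1) finite_subset by metis
  then show ?thesis using a(4) psubset_card_mono by metis
qed

lemma main:
  fixes E P Q :: "'a set" and I1 I2 :: "'a set \<Rightarrow> bool"
  assumes m1: "matroid E I1" and m2: "matroid E I2"
    and PQ: "P \<inter> Q = {}" "P \<union> Q = E"
    and dec: "\<And>X. X \<subseteq> E \<Longrightarrow> rank I2 X = rank I2 (X \<inter> P) + rank I2 (X \<inter> Q)"
    and eq: "rank I1 E = rank I2 E"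
    and Pv: "P \<in> mix_vertices E I1 I2"
  shows "A \<in> mix_vertices E I1 I2 \<Longrightarrow>
     (A, P) \<in> (mix_edges E I1 I2)\<^sup>* \<or> (A, Q) \<in> (mix_edges E I1 I2)\<^sup>*"
proof (induction "card ((A - P) \<union> (P - A))" arbitrary: A rule: less_induct)
  case less
  interpret M1: mat E I1 by (simp add: mat_def m1)
  interpret M2: mat E I2 by (simp add: mat_def m2)
  let ?V = "mix_vertices E I1 I2" and ?R = "mix_edges E I1 I2"
  have A: "A \<subseteq> E" and dA: "rank I1 A \<noteq> rank I2 A" using less.prems unfolding memV by auto
  have finE: "finite E" by (rule M1.fin)
  have PE: "P \<subseteq> E" and QE: "Q \<subseteq> E" using PQ by blast+
  have step: "\<And>B. B \<in> ?V \<Longrightarrow> B \<subseteq> E \<Longrightarrow> (B - P) \<union> (P - B) \<subset> (A - P) \<union> (P - A) \<Longrightarrow> (A, B) \<in> ?R\<^sup>*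
      \<Longrightarrow> (A, P) \<in> ?R\<^sup>* \<or> (A, Q) \<in> ?R\<^sup>*"
  proof -
    fix B assume B: "B \<in> ?V" "B \<subseteq> E" "(B - P) \<union> (P - B) \<subset> (A - P) \<union> (P - A)" "(A, B) \<in> ?R\<^sup>*"
    have "card ((B - P) \<union> (P - B)) < card ((A - P) \<union> (P - A))" using mu_lt[OF finE A PE B(3)] .
    then have "(B, P) \<in> ?R\<^sup>* \<or> (B, Q) \<in> ?R\<^sup>*" using less.hyps B(1) by blast
    then show "(A, P) \<in> ?R\<^sup>* \<or> (A, Q) \<in> ?R\<^sup>*" using B(4) by (meson rtrancl_trans)
  qed
  show ?case
  proof (cases "A \<subseteq> P \<or> P \<subseteq> A")
    case True then show ?thesis using comp_conn less.prems Pv by blast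
  next
    case False
    obtain p0 where p0: "p0 \<in> P" "p0 \<notin> A" using False by blast
    obtain q0 where q0: "q0 \<in> A" "q0 \<in> Q" using False A PQ by blast
    have p0q0: "p0 \<noteq> q0" "p0 \<notin> Q" "q0 \<notin> P" using p0 q0 PQ by blast+
    show ?thesis
    proof (cases "\<exists>p \<in> P - A. insert p A \<in> ?V")
      case True
      then obtain p where p: "p \<in> P - A" "insert p A \<in> ?V" by blast
      have "(A, insert p A) \<in> ?R\<^sup>*" using comp_conn[of A E I1 I2 "insert p A"] less.prems p by blast
      moreover have "(insert p A - P) \<union> (P - insert p A) \<subset> (A - P) \<union> (P - A)" using p by blast
      ultimately show ?thesis using step p A PE by blast
    next
      case noP: False
      show ?thesis
      proof (cases "\<exists>q \<in> A \<inter> Q. A - {q} \<in> ?V")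
        case True
        then obtain q where q: "q \<in> A \<inter> Q" "A - {q} \<in> ?V" by blast
        have "(A, A - {q}) \<in> ?R\<^sup>*" using comp_conn[of A E I1 I2 "A - {q}"] less.prems q by blast
        moreover have "(A - {q} - P) \<union> (P - (A - {q})) \<subset> (A - P) \<union> (P - A)" using q PQ by blast
        ultimately show ?thesis using step q A by blast
      next
        case noQ: False
        have zP: "\<And>p. p \<in> P - A \<Longrightarrow> rank I1 (insert p A) = rank I2 (insert p A)"
          using noP A PE by (auto simp: memV)
        have zQ: "\<And>q. q \<in> A \<inter> Q \<Longrightarrow> rank I1 (A - {q}) = rank I2 (A - {q})"
          using noQ A by (auto simp: memV)
        have incP: "\<And>p. p \<in> P - A \<Longrightarrow> rank I1 A \<le> rank I1 (insert p A) \<and> rank I1 (insert p A) \<le> rank I1 A + 1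
            \<and> rank I2 A \<le> rank I2 (insert p A) \<and> rank I2 (insert p A) \<le> rank I2 A + 1"
          using M1.rank_mono M1.rank_insert M2.rank_mono M2.rank_insert A PE by (meson DiffD1 insert_subset subset_insertI subsetD)
        have decQ: "\<And>q. q \<in> A \<inter> Q \<Longrightarrow> insert q (A - {q}) = A" by blast
        have incQ: "\<And>q. q \<in> A \<inter> Q \<Longrightarrow> rank I1 (A - {q}) \<le> rank I1 A \<and> rank I1 A \<le> rank I1 (A - {q}) + 1
            \<and> rank I2 (A - {q}) \<le> rank I2 A \<and> rank I2 A \<le> rank I2 (A - {q}) + 1"
        proof -
          fix q assume q: "q \<in> A \<inter> Q"
          have s: "A - {q} \<subseteq> E" "q \<in> E" using A q by blast+
          show "?thesis q"
            using M1.rank_mono[of "A - {q}" A] M2.rank_mono[of "A - {q}" A] M1.rank_insert[OF s] M2.rank_insert[OF s] decQ[OF q] A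
            by auto
        qed
        have cases: "rank I2 A = rank I1 A + 1 \<or> rank I1 A = rank I2 A + 1"
          using zP[of p0] incP[of p0] p0 dA by auto
        then show ?thesis
        proof
          assume c1: "rank I2 A = rank I1 A + 1"
          have h1: "rank I1 (insert p0 A) = rank I1 A + 1" "rank I2 (insert p0 A) = rank I2 A"
            using zP[of p0] incP[of p0] p0 c1 by auto
          have h2: "rank I1 (A - {q0}) = rank I1 A" "rank I2 (A - {q0}) + 1 = rank I2 A"
            using zQ[of q0] incQ[of q0] q0 c1 by auto
          define B where "B = insert p0 (A - {q0})"
          have BE: "B \<subseteq> E" using B_def A p0 PE by blast
          have "rank I1 (B \<union> A) + rank I1 (B \<inter> A) \<le> rank I1 B + rank I1 A"
            using BE A by (intro M1.submod)
          moreover have "B \<union> A = insert p0 A" "B \<inter> A = A - {q0}" using B_def p0 q0 by auto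
          ultimately have r1B: "rank I1 B \<ge> rank I1 A + 1" using h1 h2 by simp
          have d1: "rank I2 B = rank I2 (insert p0 (A \<inter> P)) + rank I2 (A \<inter> Q - {q0})"
          proof -
            have "B \<inter> P = insert p0 (A \<inter> P)" "B \<inter> Q = A \<inter> Q - {q0}" using B_def p0 p0q0 by auto
            then show ?thesis using dec[OF BE] by simp
          qed
          have d2: "rank I2 (insert p0 A) = rank I2 (insert p0 (A \<inter> P)) + rank I2 (A \<inter> Q)"
          proof -
            have "insert p0 A \<inter> P = insert p0 (A \<inter> P)" "insert p0 A \<inter> Q = A \<inter> Q" using p0 p0q0 by auto
            moreover have "insert p0 A \<subseteq> E" using A p0 PE by blast
            ultimately show ?thesis using dec by metis
          qed
          have d3: "rank I2 (A - {q0}) = rank I2 (A \<inter> P) + rank I2 (A \<inter> Q - {q0})"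
          proof -
            have "(A - {q0}) \<inter> P = A \<inter> P" "(A - {q0}) \<inter> Q = A \<inter> Q - {q0}" using p0q0 by auto
            moreover have "A - {q0} \<subseteq> E" using A by blast
            ultimately show ?thesis using dec by metis
          qed
          have d4: "rank I2 A = rank I2 (A \<inter> P) + rank I2 (A \<inter> Q)" using dec A by blast
          have r2B: "rank I2 B + 1 = rank I2 A" using d1 d2 d3 d4 h1 h2 by linarith
          have BV: "B \<in> ?V" using BE r1B r2B c1 by (auto simp: memV)
          have e: "(A, B) \<in> ?R"
          proof -
            have "A \<inter> B = A - {q0}" "A \<union> B = insert p0 A" using B_def p0 q0 by auto
            moreover have "A - {q0} \<notin> ?V" using noQ q0 by blast
            moreover have "insert p0 A \<notin> ?V" using noP p0 by blast
            moreover have "(A - B) \<union> (B - A) = {q0, p0}" using B_def p0 q0 by auto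
            moreover have "card {q0, p0} = 2" using p0q0 by simp
            ultimately show ?thesis unfolding mix_edges_def using less.prems BV by auto
          qed
          have "(B - P) \<union> (P - B) \<subset> (A - P) \<union> (P - A)" using B_def p0 q0 p0q0 by blast
          then show ?thesis using step BV BE e by blast
        next
          assume c2: "rank I1 A = rank I2 A + 1"
          have hP: "\<And>p. p \<in> P - A \<Longrightarrow> rank I1 (insert p A) = rank I1 A \<and> rank I2 (insert p A) = rank I2 A + 1"
            using zP incP c2 by fastforce
          have hQ: "\<And>q. q \<in> A \<inter> Q \<Longrightarrow> rank I1 (A - {q}) + 1 = rank I1 A \<and> rank I2 (A - {q}) = rank I2 A"
            using zQ incQ c2 by fastforce
          define b where "b = A \<inter> Q"
          define a where "a = A \<inter> P"
          have AQE: "A \<union> Q \<subseteq> E" using A QE by blast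
          have sp: "\<forall>p\<in>P - A. rank I1 (insert p (A \<union> Q)) = rank I1 (A \<union> Q)"
          proof
            fix p assume p: "p \<in> P - A"
            have "rank I1 ((A \<union> Q) \<union> insert p A) + rank I1 ((A \<union> Q) \<inter> insert p A) \<le> rank I1 (A \<union> Q) + rank I1 (insert p A)"
              using AQE A p PE by (intro M1.submod) auto
            moreover have "(A \<union> Q) \<union> insert p A = insert p (A \<union> Q)" "(A \<union> Q) \<inter> insert p A = A" using p PQ by auto
            ultimately have "rank I1 (insert p (A \<union> Q)) \<le> rank I1 (A \<union> Q)" using hP[OF p] by simp
            moreover have "rank I1 (A \<union> Q) \<le> rank I1 (insert p (A \<union> Q))" using AQE p PE by (intro M1.rank_mono) auto
            ultimately show "rank I1 (insert p (A \<union> Q)) = rank I1 (A \<union> Q)" by simp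
          qed
          have "rank I1 ((A \<union> Q) \<union> (P - A)) = rank I1 (A \<union> Q)"
            using M1.span_union[OF AQE _ sp] PE by blast
          moreover have "(A \<union> Q) \<union> (P - A) = E" using A PQ by blast
          ultimately have i: "rank I1 (A \<union> Q) = rank I1 E" by simp
          have bA: "b \<subseteq> A" using b_def by blast
          have "rank I1 (A - b) + card b = rank I1 A" using M1.coloops[OF A bA] hQ b_def by auto
          moreover have "rank I1 ((A - b) \<union> b) + rank I1 ((A - b) \<inter> b) \<le> rank I1 (A - b) + rank I1 b"
            using A bA by (intro M1.submod) auto
          moreover have "(A - b) \<union> b = A" "(A - b) \<inter> b = {}" using bA by auto
          ultimately have ii: "card b \<le> rank I1 b" using M1.rank_empty by simp
          have fb: "finite b" using bA A finE finite_subset by (metis order_trans)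
          have "rank I2 (A - {q0}) = rank I2 (A \<inter> P) + rank I2 (A \<inter> Q - {q0})"
          proof -
            have "(A - {q0}) \<inter> P = A \<inter> P" "(A - {q0}) \<inter> Q = A \<inter> Q - {q0}" using p0q0 by auto
            moreover have "A - {q0} \<subseteq> E" using A by blast
            ultimately show ?thesis using dec by metis
          qed
          moreover have d4: "rank I2 A = rank I2 (A \<inter> P) + rank I2 (A \<inter> Q)" using dec A by blast
          moreover have "rank I2 (A - {q0}) = rank I2 A" using hQ q0 by blast
          ultimately have "rank I2 b = rank I2 (b - {q0})" using b_def by simp
          moreover have "rank I2 (b - {q0}) \<le> card (b - {q0})" using M2.rank_le_card bA A by blast
          moreover have "card (b - {q0}) + 1 = card b" using fb q0 b_def
            by (metis IntI Suc_eq_plus1 card_Suc_Diff1)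
          ultimately have iii: "rank I2 b + 1 \<le> card b" by linarith
          have "rank I2 (insert p0 A) = rank I2 (insert p0 (A \<inter> P)) + rank I2 (A \<inter> Q)"
          proof -
            have "insert p0 A \<inter> P = insert p0 (A \<inter> P)" "insert p0 A \<inter> Q = A \<inter> Q" using p0 p0q0 by auto
            moreover have "insert p0 A \<subseteq> E" using A p0 PE by blast
            ultimately show ?thesis using dec by metis
          qed
          moreover have "rank I2 (insert p0 A) = rank I2 A + 1" using hP p0 by blast
          moreover have "rank I2 (insert p0 (A \<inter> P)) \<le> rank I2 P" using p0 PE by (intro M2.rank_mono) auto
          ultimately have iv: "rank I2 a + 1 \<le> rank I2 P" using d4 unfolding a_def by linarith
          have v: "rank I1 (A \<union> Q) + rank I1 (A \<inter> Q) \<le> rank I1 A + rank I1 Q"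
            using A QE by (intro M1.submod)
          have vi: "rank I2 E = rank I2 P + rank I2 Q"
          proof -
            have "E \<inter> P = P" "E \<inter> Q = Q" using PQ by auto
            then show ?thesis using dec[of E] by simp
          qed
          have Qr: "rank I2 Q + 1 \<le> rank I1 Q" using i ii iii iv v vi eq c2 d4 unfolding a_def b_def by linarith
          have br: "rank I2 b + 1 \<le> rank I1 b" using ii iii by linarith
          have QV: "Q \<in> ?V" using QE Qr by (auto simp: memV)
          have bV: "b \<in> ?V" using bA A br by (auto simp: memV)
          have "(A, b) \<in> ?R\<^sup>*" using comp_conn less.prems bV bA by blast
          moreover have "(b, Q) \<in> ?R\<^sup>*" using comp_conn QV bV b_def by blast
          ultimately show ?thesis by (meson rtrancl_trans)
        qed
      qed
    qed
  qed
qed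



lemma same_class: "(A, S) \<in> (mix_edges E I1 I2)\<^sup>* \<Longrightarrow>
   (mix_edges E I1 I2)\<^sup>* `` {A} = (mix_edges E I1 I2)\<^sup>* `` {S}"
proof -
  assume h: "(A, S) \<in> (mix_edges E I1 I2)\<^sup>*"
  then have h': "(S, A) \<in> (mix_edges E I1 I2)\<^sup>*" by (rule rtr_sym)
  show ?thesis
  proof
    show "(mix_edges E I1 I2)\<^sup>* `` {A} \<subseteq> (mix_edges E I1 I2)\<^sup>* `` {S}"
      using h' by (auto intro: rtrancl_trans)
    show "(mix_edges E I1 I2)\<^sup>* `` {S} \<subseteq> (mix_edges E I1 I2)\<^sup>* `` {A}"
      using h by (auto intro: rtrancl_trans)
  qed
qed

theorem lemma3p8:
  fixes E :: "'a set" and I1 I2 :: "'a set \<Rightarrow> bool" and P Q :: "'a set"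
  assumes "matroid E I1" and "matroid E I2"
    and "connected_matroid E I1"
    and "two_components E I2 P Q"
  shows "card (mix_components E I1 I2) \<le> 2"
proof -
  interpret M1: mat E I1 by (simp add: mat_def assms(1))
  interpret M2: mat E I2 by (simp add: mat_def assms(2))
  have Pne: "P \<noteq> {}" and Qne: "Q \<noteq> {}" and PQ: "P \<inter> Q = {}" "P \<union> Q = E"
    and di: "\<forall>X. X \<subseteq> E \<longrightarrow> (I2 X \<longleftrightarrow> I2 (X \<inter> P) \<and> I2 (X \<inter> Q))"
    using assms(4) unfolding two_components_def by auto
  have dec: "\<And>X. X \<subseteq> E \<Longrightarrow> rank I2 X = rank I2 (X \<inter> P) + rank I2 (X \<inter> Q)"
    using M2.dsum[OF PQ di] by blast
  have decQ: "\<And>X. X \<subseteq> E \<Longrightarrow> rank I2 X = rank I2 (X \<inter> Q) + rank I2 (X \<inter> P)"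
    using dec by (simp add: add.commute)
  have QP: "Q \<inter> P = {}" "Q \<union> P = E" using PQ by blast+
  have PE: "P \<subseteq> E" and QE: "Q \<subseteq> E" using PQ by blast+
  let ?V = "mix_vertices E I1 I2" and ?R = "mix_edges E I1 I2"
  have key: "\<exists>S T. \<forall>A \<in> ?V. (A, S) \<in> ?R\<^sup>* \<or> (A, T) \<in> ?R\<^sup>*"
  proof (cases "rank I1 E = rank I2 E")
    case False
    then have EV: "E \<in> ?V" by (simp add: memV)
    have "\<forall>A \<in> ?V. (A, E) \<in> ?R\<^sup>*"
    proof
      fix A assume A: "A \<in> ?V"
      then have "A \<subseteq> E" by (simp add: memV)
      then show "(A, E) \<in> ?R\<^sup>*" using comp_conn[OF A EV] by blast
    qed
    then show ?thesis by blast
  next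
    case True
    have "rank I1 E < rank I1 P + rank I1 Q" using M1.conn_sep[OF assms(3) PQ Pne Qne] .
    moreover have "rank I2 E = rank I2 P + rank I2 Q"
    proof -
      have "E \<inter> P = P" "E \<inter> Q = Q" using PQ by auto
      then show ?thesis using dec[of E] by simp
    qed
    ultimately have "rank I1 P \<noteq> rank I2 P \<or> rank I1 Q \<noteq> rank I2 Q" using True by linarith
    then have "P \<in> ?V \<or> Q \<in> ?V" using PE QE by (auto simp: memV)
    then show ?thesis
    proof
      assume "P \<in> ?V"
      then have "\<forall>A \<in> ?V. (A, P) \<in> ?R\<^sup>* \<or> (A, Q) \<in> ?R\<^sup>*"
        using main[OF assms(1,2) PQ dec True] by blast
      then show ?thesis by blast
    next
      assume "Q \<in> ?V"
      then have "\<forall>A \<in> ?V. (A, Q) \<in> ?R\<^sup>* \<or> (A, P) \<in> ?R\<^sup>*"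
        using main[OF assms(1,2) QP decQ True] by blast
      then show ?thesis by blast
    qed
  qed
  then obtain S T where ST: "\<forall>A \<in> ?V. (A, S) \<in> ?R\<^sup>* \<or> (A, T) \<in> ?R\<^sup>*" by blast
  have "mix_components E I1 I2 \<subseteq> {?R\<^sup>* `` {S}, ?R\<^sup>* `` {T}}"
  proof
    fix C assume "C \<in> mix_components E I1 I2"
    then obtain A where A: "A \<in> ?V" "C = ?R\<^sup>* `` {A}"
      unfolding mix_components_def quotient_def by blast
    then show "C \<in> {?R\<^sup>* `` {S}, ?R\<^sup>* `` {T}}" using ST same_class by blast
  qed
  moreover have "card {?R\<^sup>* `` {S}, ?R\<^sup>* `` {T}} \<le> 2" by (simp add: card_insert_if)
  ultimately show ?thesis by (meson card_mono finite.emptyI finite.insertI order_trans)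
qed

end
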